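(* Let $F\in\mathrm{Lip}_{\rm loc}(\mathbb{R})$ satisfy $F(p)=p$ for $p\in[0,1]$ and $F(p)\le p$ for $p\in[-1,0]$, and let $g(x)=\max\{1-|x|,0\}$ for $x\in\mathbb{R}$. For $\varepsilon>0$ let $u^\varepsilon$ be the viscosity solution of $u^\varepsilon_t+F(u^\varepsilon_x)=\varepsilon u^\varepsilon_{xx}$ in $\mathbb{R}\times(0,\infty)$, $u^\varepsilon(x,0)=g(x)$, and let $u$ be the viscosity solution of $u_t+F(u_x)=0$ in $\mathbb{R}\times(0,\infty)$, $u(x,0)=g(x)$. Then for every $\varepsilon\in(0,\tfrac14)$, \[ |u^\varepsilon(0,1)-u(0,1)|\ge \frac{\mathrm{e}-1}{\sqrt{\pi}\,\mathrm{e}}\sqrt{\varepsilon}. \] *)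

theory Defs
  imports "HOL-Analysis.Analysis"
begin

text \<open>Functions of (x,t) are curried: u x t. Only t \<ge> 0 matters.\<close>

definition loc_lipschitz :: "(real \<Rightarrow> real) \<Rightarrow> bool" where
  "loc_lipschitz F \<longleftrightarrow> (\<forall>K. compact K \<longrightarrow> (\<exists>L. L-lipschitz_on K F))"

definition test_fn ::
  "(real \<Rightarrow> real \<Rightarrow> real) \<Rightarrow> (real \<Rightarrow> real \<Rightarrow> real) \<Rightarrow> (real \<Rightarrow> real \<Rightarrow> real)
     \<Rightarrow> (real \<Rightarrow> real \<Rightarrow> real) \<Rightarrow> bool" where
  "test_fn \<phi> \<phi>x \<phi>t \<phi>xx \<longleftrightarrow>
     (\<forall>x t. ((\<lambda>y. \<phi> y t) has_real_derivative \<phi>x x t) (at x)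
          \<and> ((\<lambda>s. \<phi> x s) has_real_derivative \<phi>t x t) (at t)
          \<and> ((\<lambda>y. \<phi>x y t) has_real_derivative \<phi>xx x t) (at x))
   \<and> continuous_on UNIV (\<lambda>(x,t). \<phi> x t)
   \<and> continuous_on UNIV (\<lambda>(x,t). \<phi>x x t)
   \<and> continuous_on UNIV (\<lambda>(x,t). \<phi>t x t)
   \<and> continuous_on UNIV (\<lambda>(x,t). \<phi>xx x t)"

definition loc_max_at :: "(real \<Rightarrow> real \<Rightarrow> real) \<Rightarrow> real \<Rightarrow> real \<Rightarrow> bool" where
  "loc_max_at w x0 t0 \<longleftrightarrow> (\<exists>r>0. \<forall>x t. t > 0 \<and> dist (x,t) (x0,t0) < r \<longrightarrow> w x t \<le> w x0 t0)"

definition loc_min_at :: "(real \<Rightarrow> real \<Rightarrow> real) \<Rightarrow> real \<Rightarrow> real \<Rightarrow> bool" where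
  "loc_min_at w x0 t0 \<longleftrightarrow> (\<exists>r>0. \<forall>x t. t > 0 \<and> dist (x,t) (x0,t0) < r \<longrightarrow> w x t \<ge> w x0 t0)"

text \<open>Viscosity solution of u_t + F(u_x) = eps u_xx in R x (0,oo), u(x,0) = g(x).
  eps = 0 gives the first-order Hamilton-Jacobi equation.\<close>
definition visc_sol ::
  "(real \<Rightarrow> real) \<Rightarrow> real \<Rightarrow> (real \<Rightarrow> real) \<Rightarrow> (real \<Rightarrow> real \<Rightarrow> real) \<Rightarrow> bool" where
  "visc_sol F eps g u \<longleftrightarrow>
     continuous_on (UNIV \<times> {0..}) (\<lambda>(x,t). u x t)
   \<and> (\<forall>x. u x 0 = g x)
   \<and> (\<forall>\<phi> \<phi>x \<phi>t \<phi>xx x0 t0. test_fn \<phi> \<phi>x \<phi>t \<phi>xx \<and> t0 > 0 \<longrightarrow>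
        (loc_max_at (\<lambda>x t. u x t - \<phi> x t) x0 t0 \<longrightarrow>
           \<phi>t x0 t0 + F (\<phi>x x0 t0) \<le> eps * \<phi>xx x0 t0)
      \<and> (loc_min_at (\<lambda>x t. u x t - \<phi> x t) x0 t0 \<longrightarrow>
           \<phi>t x0 t0 + F (\<phi>x x0 t0) \<ge> eps * \<phi>xx x0 t0))"

text \<open>Uniqueness class: bounded and uniformly continuous on R x [0,oo).\<close>
definition BUC :: "(real \<Rightarrow> real \<Rightarrow> real) \<Rightarrow> bool" where
  "BUC u \<longleftrightarrow> bounded ((\<lambda>(x,t). u x t) ` (UNIV \<times> {0..}))
            \<and> uniformly_continuous_on (UNIV \<times> {0..}) (\<lambda>(x,t). u x t)"

end

theory Submission
  imports Defs
begin


definition gf :: "real \<Rightarrow> real" where "gf r = exp (-(r^2)/4)"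

lemma gf_pos: "gf r > 0" by (simp add: gf_def)
lemma gf_even: "gf (-r) = gf r" by (simp add: gf_def)
lemma gf_le1: "gf r \<le> 1" by (simp add: gf_def)

lemma gf_deriv: "(gf has_real_derivative (-(r/2) * gf r)) (at r)"
  unfolding gf_def by (auto intro!: derivative_eq_intros simp: field_simps)

lemma gf_ex_anti: "\<exists>F. (\<forall>x. (F has_real_derivative gf x) (at x)) \<and> F 0 = 0"
proof -
  have "\<exists>F. \<forall>x :: real. -\<infinity> < x \<longrightarrow> x < \<infinity> \<longrightarrow> (F has_vector_derivative gf x) (at x)"
    by (rule einterval_antiderivative) (auto simp: gf_def intro!: continuous_intros)
  then obtain F where F: "\<And>x. (F has_real_derivative gf x) (at x)"
    by (auto simp: has_real_derivative_iff_has_vector_derivative)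
  show ?thesis
    by (rule exI[of _ "\<lambda>x. F x - F 0"]) (auto intro!: derivative_eq_intros F)
qed

definition Phi :: "real \<Rightarrow> real" where
  "Phi = (SOME F. (\<forall>x. (F has_real_derivative gf x) (at x)) \<and> F 0 = 0)"

lemma Phi_props: "(\<forall>x. (Phi has_real_derivative gf x) (at x)) \<and> Phi 0 = 0"
  unfolding Phi_def by (rule someI_ex[OF gf_ex_anti])

lemma Phi_deriv: "(Phi has_real_derivative gf x) (at x)" using Phi_props by blast
lemma Phi_0[simp]: "Phi 0 = 0" using Phi_props by blast

lemma Phi_deriv_chain[derivative_intros]:
  "(f has_real_derivative f') (at x within S) \<Longrightarrow> ((\<lambda>x. Phi (f x)) has_real_derivative gf (f x) * f') (at x within S)"
  using DERIV_chain2[OF Phi_deriv] by blast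

lemma Phi_odd: "Phi (-x) = - Phi x"
proof -
  have "\<forall>x. ((\<lambda>x. Phi x + Phi (-x)) has_real_derivative 0) (at x)"
    by (auto intro!: derivative_eq_intros simp: gf_even)
  from DERIV_isconst_all[OF this, of x 0] show ?thesis by simp
qed

lemma Phi_mono: assumes "a \<le> b" shows "Phi a \<le> Phi b"
proof (rule DERIV_nonneg_imp_nondecreasing[of a b Phi, OF assms])
  fix y show "\<exists>d. (Phi has_real_derivative d) (at y) \<and> 0 \<le> d"
    using Phi_deriv[of y] gf_pos[of y] by (intro exI[of _ "gf y"]) simp
qed

lemma Phi_strict: assumes "a < b" shows "Phi a < Phi b"
proof (rule DERIV_pos_imp_increasing[of a b Phi, OF assms])
  fix y show "\<exists>d. (Phi has_real_derivative d) (at y) \<and> 0 < d"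
    using Phi_deriv[of y] gf_pos[of y] by (intro exI[of _ "gf y"]) simp
qed

lemma Phi_le1: "0 \<le> x \<Longrightarrow> x \<le> 1 \<Longrightarrow> Phi x \<le> x"
proof -
  assume x: "0 \<le> x" "x \<le> 1"
  have "(\<lambda>x. x - Phi x) 0 \<le> (\<lambda>x. x - Phi x) x"
  proof (rule DERIV_nonneg_imp_nondecreasing[of 0 x "\<lambda>x. x - Phi x", OF x(1)])
    fix y show "\<exists>d. ((\<lambda>x. x - Phi x) has_real_derivative d) (at y) \<and> 0 \<le> d"
    proof (rule exI[of _ "1 - gf y"], rule conjI)
      show "((\<lambda>x. x - Phi x) has_real_derivative 1 - gf y) (at y)"
        by (rule derivative_eq_intros Phi_deriv refl)+ simp
    qed (simp add: gf_le1)
  qed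
  then show ?thesis by simp
qed

lemma Phi_le2: "Phi x \<le> 2"
proof (cases "x \<le> 1")
  case True
  then have "Phi x \<le> Phi 1" by (rule Phi_mono)
  also have "\<dots> \<le> 1" using Phi_le1[of 1] by simp
  finally show ?thesis by simp
next
  case False
  have key: "gf y \<le> exp (1 - y)" for y
  proof -
    have "-(y^2)/4 \<le> 1 - y" using sum_squares_ge_zero[of "y-2" 0]
      by (simp add: power2_eq_square algebra_simps)
    then show ?thesis unfolding gf_def by simp
  qed
  have "(\<lambda>x. - exp (1 - x) - Phi x) 1 \<le> (\<lambda>x. - exp (1 - x) - Phi x) x"
    using False
  proof (intro DERIV_nonneg_imp_nondecreasing[of 1 x "\<lambda>x. - exp (1 - x) - Phi x"])
    fix y show "\<exists>d. ((\<lambda>x. - exp (1 - x) - Phi x) has_real_derivative d) (at y) \<and> 0 \<le> d"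
    proof (rule exI[of _ "exp (1 - y) - gf y"], rule conjI)
      show "((\<lambda>x. - exp (1 - x) - Phi x) has_real_derivative exp (1 - y) - gf y) (at y)"
        by (rule derivative_eq_intros Phi_deriv refl)+ simp
    qed (simp add: key)
  qed simp
  then have "Phi x \<le> 1 + Phi 1 - exp (1 - x)" by simp
  moreover have "Phi 1 \<le> 1" using Phi_le1[of 1] by simp
  moreover have "exp (1 - x) > 0" by simp
  ultimately show ?thesis by linarith
qed

definition AA :: real where "AA = Sup (range Phi)"

lemma Phi_bdd: "bdd_above (range Phi)"
  using Phi_le2 by (auto intro!: bdd_aboveI[of _ 2])

lemma Phi_le_AA: "Phi x \<le> AA"
  unfolding AA_def by (rule cSUP_upper[OF _ Phi_bdd]) simp

lemma AA_le2: "AA \<le> 2"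
  unfolding AA_def by (rule cSUP_least) (auto simp: Phi_le2)

lemma AA_pos: "AA > 0"
proof -
  have "Phi 0 < Phi 1" by (rule Phi_strict) simp
  then show ?thesis using Phi_le_AA[of 1] by simp
qed

lemma Phi_ge_mAA: "- AA \<le> Phi x"
  using Phi_le_AA[of "-x"] Phi_odd[of x] by simp

lemma AA_approx: "\<eta> > 0 \<Longrightarrow> \<exists>b. AA - \<eta> < Phi b"
proof -
  assume "\<eta> > 0"
  then have "AA - \<eta> < (SUP x. Phi x)" unfolding AA_def by simp
  then show ?thesis using less_cSUP_iff[of UNIV Phi "AA - \<eta>"] Phi_bdd by blast
qed

lemma gf_deriv_chain[derivative_intros]:
  "(f has_real_derivative f') (at x within S) \<Longrightarrow> ((\<lambda>x. gf (f x)) has_real_derivative (-(f x/2) * gf (f x)) * f') (at x within S)"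
  using DERIV_chain2[OF gf_deriv] by blast

lemma mills_up: assumes a: "a > 0" shows "AA - Phi a \<le> 2 / a * gf a"
proof (rule ccontr)
  assume neg: "\<not> ?thesis"
  define D where "D x = 2 / x * gf x - AA + Phi x" for x
  define \<eta> where "\<eta> = - D a"
  have eta: "\<eta> > 0" using neg by (simp add: \<eta>_def D_def)
  have Ddec: "D b \<le> D a" if "a \<le> b" for b
  proof (rule DERIV_nonpos_imp_nonincreasing[of a b D, OF that])
    fix y assume y: "a \<le> y" "y \<le> b"
    then have y0: "y > 0" using a by simp
    show "\<exists>d. (D has_real_derivative d) (at y) \<and> d \<le> 0"
    proof (rule exI[of _ "- 2 / y^2 * gf y"], rule conjI)
      show "(D has_real_derivative - 2 / y^2 * gf y) (at y)"
        unfolding D_def[abs_def]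
        using y0 by (auto intro!: derivative_eq_intros simp: field_simps power2_eq_square)
      show "- 2 / y^2 * gf y \<le> 0" using gf_pos[of y] y0 by (simp add: field_simps)
    qed
  qed
  obtain b where b: "AA - \<eta> < Phi b" using AA_approx[OF eta] by blast
  show False
  proof (cases "b \<le> a")
    case True
    then have "Phi b \<le> Phi a" by (rule Phi_mono)
    moreover have "2 / a * gf a > 0" using a gf_pos[of a] by simp
    ultimately show False using b by (simp add: \<eta>_def D_def)
  next
    case False
    then have "D b \<le> D a" by (intro Ddec) simp
    moreover have "2 / b * gf b > 0" using a False gf_pos[of b] by simp
    ultimately show False using b by (simp add: \<eta>_def D_def)
  qed
qed

lemma mills_low: assumes a: "a > 0" shows "2 * a / (a^2 + 2) * gf a \<le> AA - Phi a"
proof (rule ccontr)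
  assume neg: "\<not> ?thesis"
  define D where "D x = AA - Phi x - 2 * x / (x^2 + 2) * gf x" for x
  define \<eta> where "\<eta> = - D a"
  have eta: "\<eta> > 0" using neg by (simp add: \<eta>_def D_def)
  have Ddec: "D b \<le> D a" if "a \<le> b" for b
  proof (rule DERIV_nonpos_imp_nonincreasing[of a b D, OF that])
    fix y assume y: "a \<le> y" "y \<le> b"
    have p: "y^2 + 2 > 0" using zero_le_power2[of y] by linarith
    show "\<exists>d. (D has_real_derivative d) (at y) \<and> d \<le> 0"
    proof (rule exI[of _ "- 8 * gf y / (y^2 + 2)^2"], rule conjI)
      show "(D has_real_derivative - 8 * gf y / (y^2 + 2)^2) (at y)"
      proof -
        have p2: "0 < y * y + 2" using p by (simp add: power2_eq_square)
        have h: "4 + (y * (y * (y * y)) + y * (y * 4)) = (y*y+2)*(y*y+2)" by algebra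
        have q: "4 + (y * (y * (y * y)) + y * (y * 4)) \<noteq> 0" unfolding h using p2
          by (metis mult_pos_pos less_irrefl)
        show ?thesis
          unfolding D_def[abs_def]
          using p q by (auto intro!: derivative_eq_intros simp: field_simps power2_eq_square)
      qed
      show "- 8 * gf y / (y^2 + 2)^2 \<le> 0" using gf_pos[of y] p by (simp add: field_simps)
    qed
  qed
  define b where "b = max a (4 / \<eta>)"
  have b0: "b > 0" "a \<le> b" "4 / \<eta> \<le> b" using a by (auto simp: b_def)
  have "D b \<le> D a" by (rule Ddec) (simp add: b_def)
  then have 1: "AA - Phi b \<le> 2 * b / (b^2 + 2) * gf b - \<eta>" by (simp add: D_def \<eta>_def)
  have "2 * b / (b^2 + 2) * gf b \<le> 2 * b / (b^2 + 2)"
    using gf_le1[of b] b0 by (intro mult_left_le) (auto intro!: divide_nonneg_pos add_pos_nonneg)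
  also have "\<dots> \<le> 2 / b"
  proof -
    have "0 < b * b + 2" using b0 by (simp add: add_pos_pos)
    then have "b * (b * 2) / (b * b + 2) \<le> 2" by (simp add: divide_le_eq)
    then show ?thesis using b0 by (simp add: field_simps power2_eq_square)
  qed
  also have "\<dots> \<le> \<eta> / 2" using b0 eta by (simp add: field_simps)
  finally have "AA - Phi b < 0" using 1 eta by linarith
  then show False using Phi_le_AA[of b] by simp
qed



definition NN :: "real \<Rightarrow> real" where "NN z = (Phi z + AA) / (2 * AA)"
definition nn :: "real \<Rightarrow> real" where "nn z = gf z / (2 * AA)"
definition hh :: "real \<Rightarrow> real" where "hh z = z * NN z + 2 * nn z"

lemma NN_deriv: "(NN has_real_derivative nn z) (at z)"
  unfolding NN_def[abs_def] nn_def using AA_pos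
  by (auto intro!: derivative_eq_intros Phi_deriv simp: field_simps)

lemma nn_deriv: "(nn has_real_derivative (-(z/2) * nn z)) (at z)"
  unfolding nn_def[abs_def] using AA_pos
  by (auto intro!: derivative_eq_intros simp: field_simps)

lemma NN_deriv_chain[derivative_intros]:
  "(f has_real_derivative f') (at x within S) \<Longrightarrow> ((\<lambda>x. NN (f x)) has_real_derivative nn (f x) * f') (at x within S)"
  using DERIV_chain2[OF NN_deriv] by blast
lemma nn_deriv_chain[derivative_intros]:
  "(f has_real_derivative f') (at x within S) \<Longrightarrow> ((\<lambda>x. nn (f x)) has_real_derivative (-(f x/2) * nn (f x)) * f') (at x within S)"
  using DERIV_chain2[OF nn_deriv] by blast
lemma hh_deriv: "(hh has_real_derivative NN z) (at z)"
  unfolding hh_def[abs_def] by (auto intro!: derivative_eq_intros simp: algebra_simps)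

lemma hh_deriv_chain[derivative_intros]:
  "(f has_real_derivative f') (at x within S) \<Longrightarrow> ((\<lambda>x. hh (f x)) has_real_derivative NN (f x) * f') (at x within S)"
  using DERIV_chain2[OF hh_deriv] by blast

lemma isCont_NN: "isCont NN z" using NN_deriv DERIV_isCont by blast
lemma isCont_nn: "isCont nn z" using nn_deriv DERIV_isCont by blast
lemma isCont_hh: "isCont hh z" using hh_deriv DERIV_isCont by blast

lemma continuous_on_NN[continuous_intros]: "continuous_on S f \<Longrightarrow> continuous_on S (\<lambda>x. NN (f x))"
  by (rule continuous_on_compose2[of UNIV NN]) (auto intro: continuous_at_imp_continuous_on isCont_NN)
lemma continuous_on_nn[continuous_intros]: "continuous_on S f \<Longrightarrow> continuous_on S (\<lambda>x. nn (f x))"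
  by (rule continuous_on_compose2[of UNIV nn]) (auto intro: continuous_at_imp_continuous_on isCont_nn)
lemma continuous_on_hh[continuous_intros]: "continuous_on S f \<Longrightarrow> continuous_on S (\<lambda>x. hh (f x))"
  by (rule continuous_on_compose2[of UNIV hh]) (auto intro: continuous_at_imp_continuous_on isCont_hh)

lemma NN_ge0: "0 \<le> NN z" unfolding NN_def using Phi_ge_mAA[of z] AA_pos by simp
lemma NN_le1: "NN z \<le> 1" unfolding NN_def using Phi_le_AA[of z] AA_pos by simp
lemma NN_mono: "a \<le> b \<Longrightarrow> NN a \<le> NN b" unfolding NN_def using Phi_mono[of a b] AA_pos
  by (simp add: divide_right_mono)
lemma nn_pos: "0 < nn z" unfolding nn_def using gf_pos[of z] AA_pos by simp

lemma hh0: "hh 0 = 1 / AA" unfolding hh_def nn_def gf_def by simp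

lemma hh_mono: assumes "a \<le> b" shows "hh a \<le> hh b"
proof (rule DERIV_nonneg_imp_nondecreasing[of a b hh, OF assms])
  fix y show "\<exists>d. (hh has_real_derivative d) (at y) \<and> 0 \<le> d"
    using hh_deriv[of y] NN_ge0[of y] by (intro exI[of _ "NN y"]) simp
qed

lemma hh_ge_id: assumes "0 \<le> z" shows "z \<le> hh z"
proof (cases "z = 0")
  case True then show ?thesis using hh0 AA_pos by simp
next
  case False
  then have z: "z > 0" using assms by simp
  have "AA - Phi z \<le> 2 / z * gf z" by (rule mills_up[OF z])
  then have "z * (AA - Phi z) \<le> 2 * gf z" using z by (simp add: field_simps)
  then have "z * (2 * AA) \<le> z * (Phi z + AA) + 2 * gf z" by (simp add: algebra_simps)
  then have "z \<le> (z * (Phi z + AA) + 2 * gf z) / (2 * AA)" using AA_pos by (simp add: field_simps)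
  then show ?thesis unfolding hh_def NN_def nn_def using AA_pos by (simp add: field_simps)
qed

lemma hh_neg: "hh (-a) = hh a - a"
  unfolding hh_def NN_def nn_def using AA_pos by (simp add: Phi_odd gf_even field_simps)

lemma hh_nonneg: "0 \<le> hh z"
proof (cases "0 \<le> z")
  case True then show ?thesis using hh_ge_id[of z] by simp
next
  case False
  then have "hh z = hh (-z) - (-z)" using hh_neg[of "-z"] by simp
  then show ?thesis using hh_ge_id[of "-z"] False by simp
qed

lemma hh_upper: "hh z \<le> max z 0 + hh 0"
proof (cases "0 \<le> z")
  case True
  have "(\<lambda>x. hh x - x) z \<le> (\<lambda>x. hh x - x) 0"
  proof (rule DERIV_nonpos_imp_nonincreasing[of 0 z "\<lambda>x. hh x - x", OF True])
    fix y show "\<exists>d. ((\<lambda>x. hh x - x) has_real_derivative d) (at y) \<and> d \<le> 0"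
    proof (rule exI[of _ "NN y - 1"], rule conjI)
      show "((\<lambda>x. hh x - x) has_real_derivative NN y - 1) (at y)"
        by (rule derivative_eq_intros hh_deriv refl)+ simp
    qed (simp add: NN_le1)
  qed
  then show ?thesis using True by simp
next
  case False
  then show ?thesis using hh_mono[of z 0] by simp
qed

definition tau :: real where "tau = 1/10000"
definition qq :: "real \<Rightarrow> real" where "qq s = (if s \<in> {0..} then s + tau else tau * exp (s / tau))"
definition qd :: "real \<Rightarrow> real" where "qd s = (if s \<in> {0..} then 1 else exp (s / tau))"

lemma tau_pos: "tau > 0" by (simp add: tau_def)

lemma qq_pos: "qq s > 0" unfolding qq_def using tau_pos by auto

lemma qq_deriv: "(qq has_real_derivative qd s) (at s)"
proof -
  have "((\<lambda>x. if x \<in> {0..} then x + tau else tau * exp (x / tau)) has_vector_derivative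
    (if s \<in> {0..} then (\<lambda>x. 1) s else (\<lambda>x. exp (x / tau)) s)) (at s within UNIV)"
  proof (rule has_vector_derivative_If_within_closures[where T = "{..<0}"])
    show "s \<in> {0..} \<union> {..<0}" by auto
    show "UNIV = {0::real..} \<union> {..<0}" by auto
    show "((\<lambda>x. x + tau) has_vector_derivative 1) (at s within {0..} \<union> (closure {0..} \<inter> closure {..<0}))"
      by (auto intro!: derivative_eq_intros simp: has_real_derivative_iff_has_vector_derivative[symmetric])
    show "((\<lambda>x. tau * exp (x / tau)) has_vector_derivative exp (s / tau)) (at s within {..<0} \<union> (closure {0..} \<inter> closure {..<0}))"
      using tau_pos by (auto intro!: derivative_eq_intros simp: has_real_derivative_iff_has_vector_derivative[symmetric])
    show "s \<in> closure {0..} \<Longrightarrow> s \<in> closure {..<0} \<Longrightarrow> s + tau = tau * exp (s / tau)" by simp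
    show "s \<in> closure {0..} \<Longrightarrow> s \<in> closure {..<0} \<Longrightarrow> 1 = exp (s / tau)" by simp
  qed
  then have "(qq has_vector_derivative qd s) (at s)" unfolding qq_def[abs_def] qd_def by simp
  then show ?thesis by (simp add: has_real_derivative_iff_has_vector_derivative)
qed

lemma qd_eq: "qd s = min 1 (exp (s / tau))"
  unfolding qd_def using tau_pos by (auto simp: min_def field_simps)

lemma qd_pos_t: "0 \<le> s \<Longrightarrow> qd s = 1" by (simp add: qd_def)
lemma qq_pos_t: "0 \<le> s \<Longrightarrow> qq s = s + tau" by (simp add: qq_def)

definition sg :: "real \<Rightarrow> real" where "sg s = sqrt (qq s)"

lemma sg_pos: "sg s > 0" unfolding sg_def using qq_pos by simp

lemma sg_deriv: "(sg has_real_derivative qd s / (2 * sg s)) (at s)"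
proof -
  have "((\<lambda>s. sqrt (qq s)) has_real_derivative inverse (sqrt (qq s)) / 2 * qd s) (at s)"
    using DERIV_chain2[OF DERIV_real_sqrt[OF qq_pos[of s]] qq_deriv] .
  then show ?thesis unfolding sg_def[abs_def] by (simp add: field_simps)
qed

lemma sg_deriv_chain[derivative_intros]:
  "(f has_real_derivative f') (at x within S) \<Longrightarrow> ((\<lambda>x. sg (f x)) has_real_derivative qd (f x) / (2 * sg (f x)) * f') (at x within S)"
  using DERIV_chain2[OF sg_deriv] by blast

lemma continuous_on_sg[continuous_intros]: "continuous_on S f \<Longrightarrow> continuous_on S (\<lambda>x. sg (f x))"
  by (rule continuous_on_compose2[of UNIV sg]) (auto intro: continuous_at_imp_continuous_on DERIV_isCont[OF sg_deriv])
lemma continuous_on_qd[continuous_intros]: "continuous_on S f \<Longrightarrow> continuous_on S (\<lambda>x. qd (f x))"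
  unfolding qd_eq using tau_pos by (auto intro!: continuous_intros)



lemma attains_min:
  fixes G :: "real \<Rightarrow> real \<Rightarrow> real"
  assumes cont: "continuous_on (UNIV \<times> {0..}) (\<lambda>(x,t). G x t)"
    and coer: "\<And>x t. t \<ge> 0 \<Longrightarrow> a * \<bar>x\<bar> + b * t - c \<le> G x t"
    and a: "a > 0" and b: "b > 0"
  shows "\<exists>x0 t0. t0 \<ge> 0 \<and> (\<forall>x t. t \<ge> 0 \<longrightarrow> G x0 t0 \<le> G x t)"
proof -
  define m where "m = G 0 0"
  define S :: "(real \<times> real) set" where "S = UNIV \<times> {0..}"
  define K where "K = S \<inter> (\<lambda>(x,t). G x t) -` {..m}"
  have cS: "closed S" unfolding S_def by (intro closed_Times) auto
  have clK: "closed K" unfolding K_def using cont cS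
    by (intro continuous_closed_preimage) (auto simp: S_def)
  have bK: "bounded K"
  proof -
    have "norm p \<le> (m + c) / a + (m + c) / b" if "p \<in> K" for p
    proof -
      obtain x t where p: "p = (x, t)" by fastforce
      have t0: "t \<ge> 0" and Gm: "G x t \<le> m" using that by (auto simp: K_def S_def p)
      have le: "a * \<bar>x\<bar> + b * t - c \<le> m" using coer[of t x] t0 Gm by linarith
      have "a * \<bar>x\<bar> \<le> m + c" using le b t0 by (smt (verit) mult_nonneg_nonneg)
      then have x: "\<bar>x\<bar> \<le> (m + c) / a" using a by (simp add: field_simps)
      have "b * t \<le> m + c" using le a by (smt (verit) mult_nonneg_nonneg abs_ge_zero)
      then have t: "t \<le> (m + c) / b" using b by (simp add: field_simps)
      have "norm p \<le> norm x + norm t" unfolding p by (rule norm_Pair_le)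
      then show ?thesis using x t t0 by simp
    qed
    then show ?thesis unfolding bounded_iff by blast
  qed
  have cK: "compact K" using clK bK by (simp add: compact_eq_bounded_closed)
  have "(0,0) \<in> K" by (auto simp: K_def S_def m_def)
  then have ne: "K \<noteq> {}" by blast
  have contK: "continuous_on K (\<lambda>(x,t). G x t)"
    using cont by (rule continuous_on_subset) (auto simp: K_def S_def)
  obtain p0 where p0: "p0 \<in> K" and min: "\<And>q. q \<in> K \<Longrightarrow> (\<lambda>(x,t). G x t) p0 \<le> (\<lambda>(x,t). G x t) q"
    using continuous_attains_inf[OF cK ne contK] by blast
  obtain x0 t0 where p0e: "p0 = (x0, t0)" by fastforce
  have t0: "t0 \<ge> 0" and Gp0: "G x0 t0 \<le> m" using p0 by (auto simp: K_def S_def p0e)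
  have "G x0 t0 \<le> G x t" if "t \<ge> 0" for x t
  proof (cases "G x t \<le> m")
    case True
    then have "(x,t) \<in> K" using that by (auto simp: K_def S_def)
    from min[OF this] show ?thesis by (simp add: p0e)
  next
    case False then show ?thesis using Gp0 by simp
  qed
  then show ?thesis using t0 by blast
qed

lemma test_fnD:
  assumes "test_fn a ax aT axx"
  shows "((\<lambda>y. a y t) has_real_derivative ax x t) (at x)"
    "((\<lambda>s. a x s) has_real_derivative aT x t) (at t)"
    "((\<lambda>y. ax y t) has_real_derivative axx x t) (at x)"
    "continuous_on UNIV (\<lambda>p. a (fst p) (snd p))"
    "continuous_on UNIV (\<lambda>p. ax (fst p) (snd p))"
    "continuous_on UNIV (\<lambda>p. aT (fst p) (snd p))"
    "continuous_on UNIV (\<lambda>p. axx (fst p) (snd p))"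
  using assms unfolding test_fn_def case_prod_unfold by auto

lemma test_fnI:
  assumes "\<And>x t. ((\<lambda>y. a y t) has_real_derivative ax x t) (at x)"
    "\<And>x t. ((\<lambda>s. a x s) has_real_derivative aT x t) (at t)"
    "\<And>x t. ((\<lambda>y. ax y t) has_real_derivative axx x t) (at x)"
    "continuous_on UNIV (\<lambda>p. a (fst p) (snd p))"
    "continuous_on UNIV (\<lambda>p. ax (fst p) (snd p))"
    "continuous_on UNIV (\<lambda>p. aT (fst p) (snd p))"
    "continuous_on UNIV (\<lambda>p. axx (fst p) (snd p))"
  shows "test_fn a ax aT axx"
  using assms unfolding test_fn_def case_prod_unfold by auto

lemma test_fn_add:
  assumes A: "test_fn a ax aT axx" and B: "test_fn b bx bt bxx"
  shows "test_fn (\<lambda>x t. a x t + b x t) (\<lambda>x t. ax x t + bx x t) (\<lambda>x t. aT x t + bt x t) (\<lambda>x t. axx x t + bxx x t)"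
  by (rule test_fnI; (intro DERIV_add continuous_on_add test_fnD[OF A] test_fnD[OF B])?)

lemma test_fn_scale:
  assumes A: "test_fn a ax aT axx"
  shows "test_fn (\<lambda>x t. c * a x t) (\<lambda>x t. c * ax x t) (\<lambda>x t. c * aT x t) (\<lambda>x t. c * axx x t)"
  by (rule test_fnI; (intro DERIV_cmult continuous_on_mult continuous_on_const test_fnD[OF A])?)

definition psi :: "real \<Rightarrow> real" where "psi x = sqrt (1 + x^2)"
definition psid :: "real \<Rightarrow> real" where "psid x = x / sqrt (1 + x^2)"
definition psidd :: "real \<Rightarrow> real" where "psidd x = 1 / ((1 + x^2) * sqrt (1 + x^2))"

lemma one_plus_sq_pos: "0 < 1 + (x::real)^2" using zero_le_power2[of x] by linarith

lemma psi_deriv: "(psi has_real_derivative psid x) (at x)"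
proof -
  have p: "0 < 1 + x^2" by (rule one_plus_sq_pos)
  show ?thesis unfolding psi_def[abs_def] psid_def using p
    by (auto intro!: derivative_eq_intros simp: field_simps)
qed

lemma psid_deriv: "(psid has_real_derivative psidd x) (at x)"
proof -
  have p: "0 < 1 + x^2" by (rule one_plus_sq_pos)
  have s: "sqrt (1 + x^2) > 0" using p by simp
  have d1: "((\<lambda>x. sqrt (1 + x^2)) has_real_derivative inverse (sqrt (1 + x^2)) / 2 * (0 + 2 * x ^ 1 * 1)) (at x)"
    using p by (auto intro!: derivative_eq_intros simp: field_simps)
  have "((\<lambda>x. x / sqrt (1 + x^2)) has_real_derivative
     (1 * sqrt (1 + x^2) - x * (inverse (sqrt (1 + x^2)) / 2 * (0 + 2 * x ^ 1 * 1))) / (sqrt (1 + x^2))^2) (at x)"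
    using DERIV_divide[OF DERIV_ident d1] s by simp
  moreover have "(1 * sqrt (1 + x^2) - x * (inverse (sqrt (1 + x^2)) / 2 * (0 + 2 * x ^ 1 * 1))) / (sqrt (1 + x^2))^2
     = psidd x"
    unfolding psidd_def using s p
    by (simp add: field_simps power2_eq_square)
  ultimately show ?thesis unfolding psid_def[abs_def] by simp
qed

lemma psi_ge: "\<bar>x\<bar> \<le> psi x" unfolding psi_def by (simp add: real_le_rsqrt)
lemma psi_nonneg: "0 \<le> psi x" unfolding psi_def by simp
lemma psi0: "psi 0 = 1" unfolding psi_def by simp
lemma psid_bound: "\<bar>psid x\<bar> \<le> 1"
proof -
  have "\<bar>x\<bar> \<le> sqrt (1 + x^2)" by (simp add: real_le_rsqrt)
  moreover have "sqrt (1 + x^2) > 0" using one_plus_sq_pos[of x] by simp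
  ultimately show ?thesis unfolding psid_def by (simp add: abs_div field_simps)
qed
lemma psidd_bound: "0 \<le> psidd x \<and> psidd x \<le> 1"
proof -
  have p: "1 \<le> 1 + x^2" by simp
  have "1 \<le> sqrt (1 + x^2)" by simp
  then have "1 \<le> (1 + x^2) * sqrt (1 + x^2)" using p
    by (metis mult_mono' mult_1 zero_le_one)
  then show ?thesis unfolding psidd_def by simp
qed

lemma test_fn_psi: "test_fn (\<lambda>x t. psi x) (\<lambda>x t. psid x) (\<lambda>x t. 0) (\<lambda>x t. psidd x)"
proof -
  have c1: "continuous_on UNIV psi" by (rule continuous_at_imp_continuous_on) (auto intro: DERIV_isCont[OF psi_deriv])
  have c2: "continuous_on UNIV psid" by (rule continuous_at_imp_continuous_on) (auto intro: DERIV_isCont[OF psid_deriv])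
  have c3: "continuous_on UNIV psidd" unfolding psidd_def[abs_def]
    using one_plus_sq_pos by (auto intro!: continuous_intros) (metis less_irrefl)
  show ?thesis unfolding test_fn_def case_prod_unfold
    using psi_deriv psid_deriv
    by (auto intro!: continuous_intros continuous_on_compose2[OF c1] continuous_on_compose2[OF c2]
        continuous_on_compose2[OF c3])
qed

lemma test_fn_t: "test_fn (\<lambda>x t. t) (\<lambda>x t. 0) (\<lambda>x t. 1) (\<lambda>x t. 0)"
  unfolding test_fn_def case_prod_unfold by (auto intro!: derivative_eq_intros continuous_intros)

lemma test_fn_t2: "test_fn (\<lambda>x t. t^2) (\<lambda>x t. 0) (\<lambda>x t. 2 * t) (\<lambda>x t. 0)"
  unfolding test_fn_def case_prod_unfold by (auto intro!: derivative_eq_intros continuous_intros)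



lemma lower_cmp:
  fixes F g U v vx vt vxx :: _ and eps L B K1 K2 x1 t1 :: real
  assumes vs: "visc_sol F eps g U"
    and Ubd: "\<And>x t. t \<ge> 0 \<Longrightarrow> \<bar>U x t\<bar> \<le> B"
    and Lip: "L-lipschitz_on {-2..2} F"
    and Fle: "\<And>p. p \<in> {-1..1} \<Longrightarrow> F p \<le> p"
    and eps: "0 \<le> eps" "eps \<le> 1"
    and tv: "test_fn v vx vt vxx"
    and init: "\<And>x. v x 0 \<le> g x"
    and pde: "\<And>x t. t > 0 \<Longrightarrow> vt x t + vx x t \<le> eps * vxx x t"
    and grad: "\<And>x t. vx x t \<in> {-1..1}"
    and vub: "\<And>x t. t \<ge> 0 \<Longrightarrow> v x t \<le> K1 + K2 * t" and K2: "0 \<le> K2"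
    and t1: "0 \<le> t1"
  shows "v x1 t1 \<le> U x1 t1"
proof -
  have L0: "0 \<le> L" using Lip by (rule lipschitz_on_nonneg)
  have Ucont: "continuous_on (UNIV \<times> {0..}) (\<lambda>(x,t). U x t)" and Uinit: "\<And>x. U x 0 = g x"
    using vs unfolding visc_sol_def by auto
  have main: "v x1 t1 - \<delta> * (psi x1 + t1 + t1^2) \<le> U x1 t1" if d: "0 < \<delta>" "\<delta> \<le> 1" for \<delta>
  proof -
    define \<alpha> where "\<alpha> = \<delta> / (L + 2)"
    have a0: "0 < \<alpha>" using d L0 by (simp add: \<alpha>_def)
    have a1: "\<alpha> \<le> \<delta> / 2" using d L0 unfolding \<alpha>_def by (intro divide_left_mono) auto
    have a2: "(L + 1) * \<alpha> < \<delta>" using d L0 unfolding \<alpha>_def by (simp add: field_simps)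
    define phi where "phi x t = v x t + (- \<alpha>) * psi x + ((- \<delta>) * t + (- \<delta>) * t^2)" for x t
    have tf: "test_fn phi (\<lambda>x t. vx x t + (- \<alpha>) * psid x + ((- \<delta>) * 0 + (- \<delta>) * 0))
        (\<lambda>x t. vt x t + (- \<alpha>) * 0 + ((- \<delta>) * 1 + (- \<delta>) * (2 * t)))
        (\<lambda>x t. vxx x t + (- \<alpha>) * psidd x + ((- \<delta>) * 0 + (- \<delta>) * 0))"
      unfolding phi_def[abs_def]
      by (intro test_fn_add test_fn_scale tv test_fn_psi test_fn_t test_fn_t2)
    have claim: "phi x t \<le> U x t" if t: "t \<ge> 0" for x t
    proof (rule ccontr)
      assume neg: "\<not> phi x t \<le> U x t"
      define G where "G x t = U x t - phi x t" for x t
      have Gcont: "continuous_on (UNIV \<times> {0..}) (\<lambda>(x,t). G x t)"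
      proof -
        have "continuous_on UNIV (\<lambda>p. phi (fst p) (snd p))" using test_fnD(4)[OF tf] .
        then have "continuous_on (UNIV \<times> {0..}) (\<lambda>p. phi (fst p) (snd p))"
          by (rule continuous_on_subset) auto
        then show ?thesis using Ucont unfolding G_def case_prod_unfold
          by (intro continuous_on_diff)
      qed
      define c where "c = B + K1 + K2^2 / (4 * \<delta>)"
      have coer: "\<alpha> * \<bar>y\<bar> + \<delta> * s - c \<le> G y s" if s: "s \<ge> 0" for y s
      proof -
        have "- B \<le> U y s" using Ubd[of s y] Ubd[of y s] s by (simp add: abs_le_iff)
        moreover have "v y s \<le> K1 + K2 * s" by (rule vub[OF s])
        moreover have "\<alpha> * \<bar>y\<bar> \<le> \<alpha> * psi y" using a0 psi_ge[of y] by simp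
        moreover have "K2 * s - K2^2 / (4 * \<delta>) \<le> \<delta> * s^2"
        proof -
          have "0 \<le> (2 * \<delta> * s - K2)^2" by simp
          then have "0 \<le> 4 * \<delta>^2 * s^2 - 4 * \<delta> * K2 * s + K2^2" by (simp add: power2_eq_square algebra_simps)
          then have "4 * \<delta> * (K2 * s) - K2^2 \<le> 4 * \<delta> * (\<delta> * s^2)" by (simp add: power2_eq_square algebra_simps)
          then show ?thesis using d by (simp add: field_simps)
        qed
        ultimately show ?thesis unfolding G_def phi_def c_def by (simp add: algebra_simps)
      qed
      obtain x0 t0 where t0: "t0 \<ge> 0" and min: "\<And>y s. s \<ge> 0 \<Longrightarrow> G x0 t0 \<le> G y s"
        using attains_min[OF Gcont coer a0 d(1)] by blast
      have Gneg: "G x0 t0 < 0" using min[of t x] t neg unfolding G_def by simp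
      have "t0 \<noteq> 0"
      proof
        assume "t0 = 0"
        then have "G x0 t0 = g x0 - v x0 0 + \<alpha> * psi x0" unfolding G_def phi_def by (simp add: Uinit)
        moreover have "0 \<le> \<alpha> * psi x0" using a0 psi_nonneg[of x0] by simp
        ultimately show False using Gneg init[of x0] by simp
      qed
      then have t0p: "t0 > 0" using t0 by simp
      have lm: "loc_min_at (\<lambda>x t. U x t - phi x t) x0 t0"
        unfolding loc_min_at_def
        by (rule exI[of _ 1]) (use min in \<open>auto simp: G_def\<close>)
      have "(vt x0 t0 + (- \<alpha>) * 0 + ((- \<delta>) * 1 + (- \<delta>) * (2 * t0))) +
          F (vx x0 t0 + (- \<alpha>) * psid x0 + ((- \<delta>) * 0 + (- \<delta>) * 0))
          \<ge> eps * (vxx x0 t0 + (- \<alpha>) * psidd x0 + ((- \<delta>) * 0 + (- \<delta>) * 0))"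
        using vs tf t0p lm unfolding visc_sol_def by blast
      then have ineq: "vt x0 t0 - \<delta> - 2 * \<delta> * t0 + F (vx x0 t0 - \<alpha> * psid x0)
          \<ge> eps * (vxx x0 t0 - \<alpha> * psidd x0)" by simp
      define p where "p = vx x0 t0"
      define p' where "p' = vx x0 t0 - \<alpha> * psid x0"
      have p: "p \<in> {-1..1}" using grad unfolding p_def by simp
      have pp: "\<bar>p' - p\<bar> \<le> \<alpha>" unfolding p'_def p_def using psid_bound[of x0] a0
        by (simp add: abs_mult)
      have p'r: "p' \<in> {-2..2}" using p pp a1 d by auto
      have "dist (F p') (F p) \<le> L * dist p' p"
        by (rule lipschitz_onD[OF Lip p'r]) (use p in auto)
      then have Fp': "F p' \<le> F p + L * \<alpha>"
        using pp L0 by (simp add: dist_real_def) (smt (verit) mult_left_mono)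
      have Fp: "F p \<le> p" using Fle[OF p] .
      have "eps * (vxx x0 t0 - \<alpha> * psidd x0) \<ge> eps * vxx x0 t0 - \<alpha>"
      proof -
        have "eps * (\<alpha> * psidd x0) \<le> 1 * \<alpha>"
          using eps psidd_bound[of x0] a0 by (intro mult_mono) (auto simp: mult_le_one)
        then show ?thesis by (simp add: algebra_simps)
      qed
      moreover have "vt x0 t0 + p \<le> eps * vxx x0 t0" using pde[OF t0p] unfolding p_def .
      moreover have "0 \<le> 2 * \<delta> * t0" using d t0 by simp
      ultimately have "\<delta> \<le> (L + 1) * \<alpha>" using ineq Fp' Fp unfolding p'_def[symmetric]
        by (simp add: algebra_simps)
      then show False using a2 by simp
    qed
    have "phi x1 t1 \<le> U x1 t1" by (rule claim[OF t1])
    moreover have "\<alpha> * psi x1 \<le> \<delta> * psi x1" using a1 d psi_nonneg[of x1] by (intro mult_right_mono) auto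
    ultimately show ?thesis unfolding phi_def by (simp add: algebra_simps)
  qed
  show ?thesis
  proof (rule ccontr)
    assume neg: "\<not> ?thesis"
    define C where "C = psi x1 + t1 + t1^2"
    have C0: "0 \<le> C" using psi_nonneg[of x1] t1 by (simp add: C_def)
    define dd where "dd = v x1 t1 - U x1 t1"
    have dd: "dd > 0" using neg by (simp add: dd_def)
    define \<delta> where "\<delta> = min 1 (dd / (2 * (C + 1)))"
    have d0: "0 < \<delta>" "\<delta> \<le> 1" using dd C0 by (auto simp: \<delta>_def)
    have "\<delta> * C \<le> dd / (2 * (C + 1)) * C" using C0 by (intro mult_right_mono) (auto simp: \<delta>_def)
    also have "\<dots> < dd" using dd C0 mult_nonneg_nonneg[of C dd] by (simp add: field_simps) (smt (verit) mult_nonneg_nonneg)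
    finally show False using main[OF d0] by (simp add: C_def dd_def)
  qed
qed

lemma upper_cmp:
  fixes F g U w wx wt wxx :: _ and L B K1 x1 t1 :: real
  assumes vs: "visc_sol F 0 g U"
    and Ubd: "\<And>x t. t \<ge> 0 \<Longrightarrow> \<bar>U x t\<bar> \<le> B"
    and Lip: "L-lipschitz_on {-2..2} F"
    and Feq: "\<And>p. p \<in> {0..1} \<Longrightarrow> F p = p"
    and tw: "test_fn w wx wt wxx"
    and init: "\<And>x. g x \<le> w x 0"
    and pde: "\<And>x t. t > 0 \<Longrightarrow> 0 \<le> wt x t + wx x t"
    and grad: "\<And>x t. wx x t \<in> {0..1}"
    and wlb: "\<And>x t. t \<ge> 0 \<Longrightarrow> - K1 \<le> w x t"
    and t1: "0 \<le> t1"
  shows "U x1 t1 \<le> w x1 t1"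
proof -
  have L0: "0 \<le> L" using Lip by (rule lipschitz_on_nonneg)
  have Ucont: "continuous_on (UNIV \<times> {0..}) (\<lambda>(x,t). U x t)" and Uinit: "\<And>x. U x 0 = g x"
    using vs unfolding visc_sol_def by auto
  have main: "U x1 t1 \<le> w x1 t1 + \<delta> * (psi x1 + t1 + t1^2)" if d: "0 < \<delta>" "\<delta> \<le> 1" for \<delta>
  proof -
    define \<alpha> where "\<alpha> = \<delta> / (L + 2)"
    have a0: "0 < \<alpha>" using d L0 by (simp add: \<alpha>_def)
    have a1: "\<alpha> \<le> \<delta> / 2" using d L0 unfolding \<alpha>_def by (intro divide_left_mono) auto
    have a2: "(L + 1) * \<alpha> < \<delta>" using d L0 unfolding \<alpha>_def by (simp add: field_simps)
    define phi where "phi x t = w x t + \<alpha> * psi x + (\<delta> * t + \<delta> * t^2)" for x t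
    have tf: "test_fn phi (\<lambda>x t. wx x t + \<alpha> * psid x + (\<delta> * 0 + \<delta> * 0))
        (\<lambda>x t. wt x t + \<alpha> * 0 + (\<delta> * 1 + \<delta> * (2 * t)))
        (\<lambda>x t. wxx x t + \<alpha> * psidd x + (\<delta> * 0 + \<delta> * 0))"
      unfolding phi_def[abs_def]
      by (intro test_fn_add test_fn_scale tw test_fn_psi test_fn_t test_fn_t2)
    have claim: "U x t \<le> phi x t" if t: "t \<ge> 0" for x t
    proof (rule ccontr)
      assume neg: "\<not> U x t \<le> phi x t"
      define G where "G x t = phi x t - U x t" for x t
      have Gcont: "continuous_on (UNIV \<times> {0..}) (\<lambda>(x,t). G x t)"
      proof -
        have "continuous_on UNIV (\<lambda>p. phi (fst p) (snd p))" using test_fnD(4)[OF tf] .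
        then have "continuous_on (UNIV \<times> {0..}) (\<lambda>p. phi (fst p) (snd p))"
          by (rule continuous_on_subset) auto
        then show ?thesis using Ucont unfolding G_def case_prod_unfold
          by (intro continuous_on_diff)
      qed
      define c where "c = B + K1"
      have coer: "\<alpha> * \<bar>y\<bar> + \<delta> * s - c \<le> G y s" if s: "s \<ge> 0" for y s
      proof -
        have "U y s \<le> B" using Ubd[of s y] Ubd[of y s] s by (simp add: abs_le_iff)
        moreover have "- K1 \<le> w y s" by (rule wlb[OF s])
        moreover have "\<alpha> * \<bar>y\<bar> \<le> \<alpha> * psi y" using a0 psi_ge[of y] by simp
        moreover have "0 \<le> \<delta> * s^2" using d by simp
        ultimately show ?thesis unfolding G_def phi_def c_def by (simp add: algebra_simps)
      qed
      obtain x0 t0 where t0: "t0 \<ge> 0" and min: "\<And>y s. s \<ge> 0 \<Longrightarrow> G x0 t0 \<le> G y s"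
        using attains_min[OF Gcont coer a0 d(1)] by blast
      have Gneg: "G x0 t0 < 0" using min[of t x] t neg unfolding G_def by simp
      have "t0 \<noteq> 0"
      proof
        assume "t0 = 0"
        then have "G x0 t0 = w x0 0 + \<alpha> * psi x0 - g x0" unfolding G_def phi_def by (simp add: Uinit)
        moreover have "0 \<le> \<alpha> * psi x0" using a0 psi_nonneg[of x0] by simp
        ultimately show False using Gneg init[of x0] by simp
      qed
      then have t0p: "t0 > 0" using t0 by simp
      have lm: "loc_max_at (\<lambda>x t. U x t - phi x t) x0 t0"
        unfolding loc_max_at_def
      proof (rule exI[of _ 1], intro conjI allI impI)
        fix y s assume "0 < s \<and> dist (y, s) (x0, t0) < 1"
        then have "G x0 t0 \<le> G y s" using min[of s y] by simp
        then show "U y s - phi y s \<le> U x0 t0 - phi x0 t0" unfolding G_def by simp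
      qed simp
      have "(wt x0 t0 + \<alpha> * 0 + (\<delta> * 1 + \<delta> * (2 * t0))) +
          F (wx x0 t0 + \<alpha> * psid x0 + (\<delta> * 0 + \<delta> * 0))
          \<le> 0 * (wxx x0 t0 + \<alpha> * psidd x0 + (\<delta> * 0 + \<delta> * 0))"
        using vs tf t0p lm unfolding visc_sol_def by blast
      then have ineq: "wt x0 t0 + \<delta> + 2 * \<delta> * t0 + F (wx x0 t0 + \<alpha> * psid x0) \<le> 0" by simp
      define p where "p = wx x0 t0"
      define p' where "p' = wx x0 t0 + \<alpha> * psid x0"
      have p: "p \<in> {0..1}" using grad unfolding p_def by simp
      have pp: "\<bar>p' - p\<bar> \<le> \<alpha>" unfolding p'_def p_def using psid_bound[of x0] a0
        by (simp add: abs_mult)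
      have p'r: "p' \<in> {-2..2}" using p pp a1 d by auto
      have "dist (F p') (F p) \<le> L * dist p' p"
        by (rule lipschitz_onD[OF Lip p'r]) (use p in auto)
      then have Fp': "F p - L * \<alpha> \<le> F p'"
        using pp L0 by (simp add: dist_real_def) (smt (verit) mult_left_mono)
      have Fp: "F p = p" using Feq[OF p] .
      have "0 \<le> wt x0 t0 + p" using pde[OF t0p] unfolding p_def .
      moreover have "0 \<le> 2 * \<delta> * t0" using d t0 by simp
      moreover have "0 \<le> L * \<alpha>" using L0 a0 by simp
      ultimately have "\<delta> \<le> (L + 1) * \<alpha>" using ineq Fp' Fp a0 unfolding p'_def[symmetric]
        by (simp add: algebra_simps)
      then show False using a2 by simp
    qed
    have "U x1 t1 \<le> phi x1 t1" by (rule claim[OF t1])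
    moreover have "\<alpha> * psi x1 \<le> \<delta> * psi x1" using a1 d psi_nonneg[of x1] by (intro mult_right_mono) auto
    ultimately show ?thesis unfolding phi_def by (simp add: algebra_simps)
  qed
  show ?thesis
  proof (rule ccontr)
    assume neg: "\<not> ?thesis"
    define C where "C = psi x1 + t1 + t1^2"
    have C0: "0 \<le> C" using psi_nonneg[of x1] t1 by (simp add: C_def)
    define dd where "dd = U x1 t1 - w x1 t1"
    have dd: "dd > 0" using neg by (simp add: dd_def)
    define \<delta> where "\<delta> = min 1 (dd / (2 * (C + 1)))"
    have d0: "0 < \<delta>" "\<delta> \<le> 1" using dd C0 by (auto simp: \<delta>_def)
    have "\<delta> * C \<le> dd / (2 * (C + 1)) * C" using C0 by (intro mult_right_mono) (auto simp: \<delta>_def)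
    also have "\<dots> < dd" using dd C0 mult_nonneg_nonneg[of C dd] by (simp add: field_simps) (smt (verit) mult_nonneg_nonneg)
    finally show False using main[OF d0] by (simp add: C_def dd_def)
  qed
qed



definition Hd :: "real \<Rightarrow> real \<Rightarrow> real" where "Hd d y = d * ln (1 + exp ((y + 1) / d))"
definition Hp :: "real \<Rightarrow> real \<Rightarrow> real" where "Hp d y = exp ((y + 1) / d) / (1 + exp ((y + 1) / d))"
definition Hpp :: "real \<Rightarrow> real \<Rightarrow> real" where "Hpp d y = exp ((y + 1) / d) / (d * (1 + exp ((y + 1) / d))^2)"

lemma Hd_deriv: "d > 0 \<Longrightarrow> (Hd d has_real_derivative Hp d y) (at y)"
proof -
  assume d: "d > 0"
  have p: "0 < 1 + exp ((y + 1) / d)" by (simp add: add_pos_pos)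
  have q: "0 < 1 + exp ((1 + y) / d)" by (simp add: add_pos_pos)
  have "0 < d * (1 + exp ((1 + y) / d))" using d q by simp
  then have p2: "d + d * exp ((1 + y) / d) \<noteq> 0" "1 + exp ((1 + y) / d) \<noteq> 0"
    using q by (simp_all add: distrib_left)
  show ?thesis unfolding Hd_def[abs_def] Hp_def using d p p2
    by (auto intro!: derivative_eq_intros simp: field_simps)
qed

lemma Hp_deriv: "d > 0 \<Longrightarrow> (Hp d has_real_derivative Hpp d y) (at y)"
proof -
  assume d: "d > 0"
  have p: "0 < 1 + exp ((y + 1) / d)" by (simp add: add_pos_pos)
  then have p': "1 + exp ((y + 1) / d) \<noteq> 0" by simp
  show ?thesis unfolding Hp_def[abs_def] Hpp_def using d p p'
    by (auto intro!: derivative_eq_intros simp: field_simps power2_eq_square)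
qed

lemma Hd_chain[derivative_intros]: "d > 0 \<Longrightarrow> (f has_real_derivative f') (at x within S) \<Longrightarrow>
   ((\<lambda>x. Hd d (f x)) has_real_derivative Hp d (f x) * f') (at x within S)"
  using DERIV_chain2[OF Hd_deriv] by blast
lemma Hp_chain[derivative_intros]: "d > 0 \<Longrightarrow> (f has_real_derivative f') (at x within S) \<Longrightarrow>
   ((\<lambda>x. Hp d (f x)) has_real_derivative Hpp d (f x) * f') (at x within S)"
  using DERIV_chain2[OF Hp_deriv] by blast

lemma test_fn_H: assumes d: "d > 0"
  shows "test_fn (\<lambda>x t. Hd d (x - t)) (\<lambda>x t. Hp d (x - t)) (\<lambda>x t. - Hp d (x - t)) (\<lambda>x t. Hpp d (x - t))"
proof (rule test_fnI)
  fix x t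
  show "((\<lambda>y. Hd d (y - t)) has_real_derivative Hp d (x - t)) (at x)"
    using d by (auto intro!: derivative_eq_intros)
  show "((\<lambda>s. Hd d (x - s)) has_real_derivative - Hp d (x - t)) (at t)"
    using d by (auto intro!: derivative_eq_intros)
  show "((\<lambda>y. Hp d (y - t)) has_real_derivative Hpp d (x - t)) (at x)"
    using d by (auto intro!: derivative_eq_intros)
next
  have p: "\<And>u. 1 + exp u \<noteq> (0::real)" by (metis add_pos_pos exp_gt_zero less_irrefl zero_less_one)
  have p2: "\<And>u. d * (1 + exp u)^2 \<noteq> (0::real)" using d p by simp
  have p3: "\<And>u. 0 < 1 + exp (u::real)" by (simp add: add_pos_pos)
  show "continuous_on UNIV (\<lambda>p. Hd d (fst p - snd p))"
    unfolding Hd_def using d p3 by (auto intro!: continuous_intros simp: ln_gt_zero_iff less_imp_neq[symmetric])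
  show "continuous_on UNIV (\<lambda>p. Hp d (fst p - snd p))"
    unfolding Hp_def using d p by (auto intro!: continuous_intros)
  show "continuous_on UNIV (\<lambda>p. - Hp d (fst p - snd p))"
    unfolding Hp_def using d p by (auto intro!: continuous_intros)
  show "continuous_on UNIV (\<lambda>p. Hpp d (fst p - snd p))"
    unfolding Hpp_def using d p2 by (auto intro!: continuous_intros)
qed

lemma Hd_nonneg: "d > 0 \<Longrightarrow> 0 \<le> Hd d y"
  unfolding Hd_def by (simp add: add_pos_pos)

lemma Hd_ge: assumes d: "d > 0" shows "y + 1 \<le> Hd d y"
proof -
  have "(y + 1) / d \<le> ln (1 + exp ((y + 1) / d))"
    by (subst ln_ge_iff) (auto simp: add_pos_pos)
  then show ?thesis unfolding Hd_def using d by (simp add: field_simps)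
qed

lemma Hp_range: "d > 0 \<Longrightarrow> Hp d y \<in> {0..1}"
  unfolding Hp_def by (auto simp: add_pos_pos)

lemma u_upper:
  fixes F g u :: _ and L B :: real
  assumes vs: "visc_sol F 0 g u"
    and Ubd: "\<And>x t. t \<ge> 0 \<Longrightarrow> \<bar>u x t\<bar> \<le> B"
    and Lip: "L-lipschitz_on {-2..2} F"
    and Feq: "\<And>p. p \<in> {0..1} \<Longrightarrow> F p = p"
    and g: "\<And>x. g x = max (1 - \<bar>x\<bar>) 0"
  shows "u 0 1 \<le> 0"
proof -
  have "u 0 1 \<le> d * ln 2" if d: "d > 0" for d
  proof -
    have "u 0 1 \<le> Hd d (0 - 1)"
    proof (rule upper_cmp[OF vs Ubd Lip Feq test_fn_H[OF d]])
      fix x show "g x \<le> Hd d (x - 0)" using Hd_ge[OF d, of x] Hd_nonneg[OF d, of x] g[of x] by auto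
    next
      fix x t show "0 \<le> - Hp d (x - t) + Hp d (x - t)" by simp
    next
      fix x t show "Hp d (x - t) \<in> {0..1}" using Hp_range[OF d] .
    next
      fix x t show "- 0 \<le> Hd d (x - t)" using Hd_nonneg[OF d] by simp
    qed auto
    then show ?thesis unfolding Hd_def by simp
  qed
  note H = this
  show ?thesis
  proof (rule ccontr)
    assume "\<not> u 0 1 \<le> 0"
    then have pos: "u 0 1 > 0" by simp
    have "u 0 1 \<le> (u 0 1 / 2) * ln 2" using H[of "u 0 1 / 2"] pos by simp
    also have "\<dots> \<le> (u 0 1 / 2) * 1" using pos ln_2_less_1 by (intro mult_left_mono) auto
    finally show False using pos by simp
  qed
qed



lemma RR_t:
  assumes Y: "(Y has_real_derivative Y') (at t)"
  shows "((\<lambda>t. sg t * hh (Y t / sg t)) has_real_derivative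
           (qd t * nn (Y t / sg t) / sg t + NN (Y t / sg t) * Y')) (at t)"
proof -
  have s: "sg t > 0" by (rule sg_pos)
  have eq: "qd t / (2 * sg t) * 1 * hh (Y t / sg t) + NN (Y t / sg t) * ((Y' * sg t - Y t * (qd t / (2 * sg t) * 1)) / (sg t * sg t)) * sg t = qd t * nn (Y t / sg t) / sg t + NN (Y t / sg t) * Y'"
    unfolding hh_def using s by (simp add: field_simps)
  show ?thesis
    apply (rule DERIV_cong)
     apply (rule derivative_intros Y DERIV_ident)+
    using s apply simp
    apply (rule eq)
    done
qed

definition Zc :: "real \<Rightarrow> real \<Rightarrow> real \<Rightarrow> real" where "Zc e x t = (x - t + 1) / e"
definition vv :: "real \<Rightarrow> real \<Rightarrow> real \<Rightarrow> real" where
  "vv e x t = e * (sg t * hh (Zc e x t / sg t) - 2 * (sg t * hh ((Zc e x t - 2) / sg t)) - sqrt tau * hh 0)"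
definition vvx :: "real \<Rightarrow> real \<Rightarrow> real \<Rightarrow> real" where
  "vvx e x t = NN (Zc e x t / sg t) - 2 * NN ((Zc e x t - 2) / sg t)"
definition vvxx :: "real \<Rightarrow> real \<Rightarrow> real \<Rightarrow> real" where
  "vvxx e x t = (nn (Zc e x t / sg t) - 2 * nn ((Zc e x t - 2) / sg t)) / (e * sg t)"
definition vvt :: "real \<Rightarrow> real \<Rightarrow> real \<Rightarrow> real" where
  "vvt e x t = e * (qd t * (nn (Zc e x t / sg t) - 2 * nn ((Zc e x t - 2) / sg t)) / sg t) - vvx e x t"

lemma test_fn_vv: assumes e: "e > 0" shows "test_fn (vv e) (vvx e) (vvt e) (vvxx e)"
proof (rule test_fnI)
  fix x t
  have s: "sg t > 0" by (rule sg_pos)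
  show "((\<lambda>y. vv e y t) has_real_derivative vvx e x t) (at x)"
    unfolding vv_def[abs_def] vvx_def Zc_def using e s
    by (auto intro!: derivative_eq_intros simp: field_simps)
  show "((\<lambda>y. vvx e y t) has_real_derivative vvxx e x t) (at x)"
    unfolding vvx_def[abs_def] vvxx_def Zc_def using e s
    by (auto intro!: derivative_eq_intros simp: field_simps)
  have d1: "((\<lambda>t. Zc e x t) has_real_derivative - 1 / e) (at t)"
    unfolding Zc_def using e by (auto intro!: derivative_eq_intros simp: field_simps)
  have d2: "((\<lambda>t. Zc e x t - 2) has_real_derivative - 1 / e) (at t)"
    unfolding Zc_def using e by (auto intro!: derivative_eq_intros simp: field_simps)
  have der: "((\<lambda>t. e * (sg t * hh (Zc e x t / sg t) - 2 * (sg t * hh ((Zc e x t - 2) / sg t)) - sqrt tau * hh 0))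
     has_real_derivative e * ((qd t * nn (Zc e x t / sg t) / sg t + NN (Zc e x t / sg t) * (- 1 / e))
        - 2 * (qd t * nn ((Zc e x t - 2) / sg t) / sg t + NN ((Zc e x t - 2) / sg t) * (- 1 / e)) - 0)) (at t)"
    by (intro DERIV_cmult DERIV_diff RR_t d1 d2 DERIV_const)
  have f: "(\<lambda>s. vv e x s) = (\<lambda>t. e * (sg t * hh (Zc e x t / sg t) - 2 * (sg t * hh ((Zc e x t - 2) / sg t)) - sqrt tau * hh 0))"
    by (rule ext) (simp add: vv_def)
  show "((\<lambda>s. vv e x s) has_real_derivative vvt e x t) (at t)"
    unfolding f by (rule DERIV_cong[OF der]) (use e s in \<open>simp add: vvt_def vvx_def field_simps\<close>)
next
  have ne: "\<And>p. sg (snd p) \<noteq> 0" using sg_pos by (metis less_irrefl)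
  have ne2: "\<And>p. e * sg (snd p) \<noteq> 0" using sg_pos e by (metis mult_pos_pos less_irrefl)
  show "continuous_on UNIV (\<lambda>p. vv e (fst p) (snd p))"
    unfolding vv_def Zc_def using e ne by (auto intro!: continuous_intros)
  show "continuous_on UNIV (\<lambda>p. vvx e (fst p) (snd p))"
    unfolding vvx_def Zc_def using e ne by (auto intro!: continuous_intros)
  show "continuous_on UNIV (\<lambda>p. vvt e (fst p) (snd p))"
    unfolding vvt_def vvx_def Zc_def using e ne by (auto intro!: continuous_intros)
  show "continuous_on UNIV (\<lambda>p. vvxx e (fst p) (snd p))"
    unfolding vvxx_def Zc_def using e ne ne2 by (auto intro!: continuous_intros)
qed

lemma numeric:
  fixes y G S1 A sp :: real
  assumes y: "100/272 \<le> y" "y \<le> 1/2" and G: "G \<le> y * (1 + 2/10000)" "0 \<le> G"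
    and S1: "1 \<le> S1" and A: "0 < A" "A \<le> 2" and sp: "177/100 \<le> sp"
  shows "(1 - y) / sp \<le> (S1 * (1 - G * (2 + 2/10000) / (3 + 1/10000)) - 1/100) / A"
proof -
  define k where "k = G * (2 + 2/10000) / (3 + 1/10000)"
  have k0: "0 \<le> k" "k \<le> y * (1 + 2/10000) * (2 + 2/10000) / (3 + 1/10000)"
    using G by (auto simp: k_def divide_right_mono)
  have k1: "k < 1/2" using k0 y by simp
  have "1 - k \<le> S1 * (1 - k)" using S1 k1 by (simp add: mult_le_cancel_right1)
  then have n1: "1 - k - 1/100 \<le> S1 * (1 - k) - 1/100" by simp
  have n0: "0 < 1 - k - 1/100" using k1 by simp
  have "(1 - k - 1/100) / 2 \<le> (1 - k - 1/100) / A" using n0 A by (intro divide_left_mono) auto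
  also have "\<dots> \<le> (S1 * (1 - k) - 1/100) / A" using n1 A by (intro divide_right_mono) auto
  finally have r: "(1 - k - 1/100) / 2 \<le> (S1 * (1 - k) - 1/100) / A" .
  have "(1 - y) / sp \<le> (1 - y) / (177/100)" using y sp by (intro divide_left_mono) auto
  also have "\<dots> \<le> (1 - k - 1/100) / 2" using k0 y by simp
  finally have "(1 - y) / sp \<le> (S1 * (1 - k) - 1/100) / A" using r by linarith
  then show ?thesis unfolding k_def .
qed

lemma sqrt_tau: "sqrt tau = 1/100"
proof -
  have "sqrt (1/10000) = (1/100::real)" by (rule real_sqrt_unique) (auto simp: power2_eq_square)
  then show ?thesis by (simp add: tau_def)
qed

lemma value_W1: "(exp 1 - 1) / (sqrt pi * exp 1) \<le> sg 1 * hh 0 - 2 * (sg 1 * hh ((0 - 2) / sg 1)) - sqrt tau * hh 0"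
proof -
  define S1 where "S1 = sg 1"
  have S1e: "S1 = sqrt (1 + tau)" unfolding S1_def sg_def qq_def by simp
  have S1sq: "S1^2 = 1 + tau" unfolding S1e using tau_pos by simp
  have S1ge: "1 \<le> S1" unfolding S1e using tau_pos by simp
  define a where "a = 2 / S1"
  have a0: "a > 0" using S1ge by (simp add: a_def)
  have S1a: "S1 * a = 2" using S1ge by (simp add: a_def)
  have AA0: "AA > 0" by (rule AA_pos)
  have hma: "hh (-a) = - a * ((AA - Phi a) / (2 * AA)) + 2 * (gf a / (2 * AA))"
    unfolding hh_def NN_def nn_def by (simp add: Phi_odd gf_even)
  have W: "S1 * hh 0 - 2 * (S1 * hh ((0 - 2) / S1)) - sqrt tau * hh 0
      = (S1 + 2 * (AA - Phi a) - 2 * S1 * gf a - 1/100) / AA"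
  proof -
    have "(0 - 2) / S1 = - a" by (simp add: a_def)
    then have "S1 * hh 0 - 2 * (S1 * hh ((0 - 2) / S1)) - sqrt tau * hh 0
        = S1 / AA - 2 * (S1 * (- a * ((AA - Phi a) / (2 * AA)) + 2 * (gf a / (2 * AA)))) - 1/100 / AA"
      using hma by (simp add: hh0 sqrt_tau)
    also have "\<dots> = (S1 + (S1 * a) * (AA - Phi a) - 2 * S1 * gf a - 1/100) / AA"
      using AA0 by (simp add: field_simps)
    finally show ?thesis using S1a by simp
  qed
  have asq: "a^2 = 4 / (1 + tau)" unfolding a_def power_divide S1sq by simp
  have ml: "2 * a / (a^2 + 2) * gf a \<le> AA - Phi a" by (rule mills_low[OF a0])
  have coef: "2 * a / (a^2 + 2) = 2 * S1 / (3 + tau)"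
  proof -
    have t0: "0 < tau" by (rule tau_pos)
    have "2 * a / (a^2 + 2) = 2 * (2 / S1) / (4 / (1 + tau) + 2)" unfolding asq by (simp add: a_def)
    also have "\<dots> = 4 * (1 + tau) / (S1 * (6 + 2 * tau))" using t0 S1ge by (simp add: field_simps)
    also have "\<dots> = 4 * S1^2 / (S1 * (6 + 2 * tau))" using S1sq by simp
    also have "\<dots> = 2 * S1 / (3 + tau)"
    proof -
      have n: "S1 * (6 + 2 * tau) \<noteq> 0" "3 + tau \<noteq> 0" using t0 S1ge by auto
      have "4 * S1^2 / (S1 * (6 + 2 * tau)) = (2 * S1) * (2 * S1) / ((3 + tau) * (2 * S1))"
        by (simp add: power2_eq_square algebra_simps)
      also have "\<dots> = 2 * S1 / (3 + tau)"
      proof -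
        have "2 * S1 \<noteq> 0" using S1ge by simp
        then show ?thesis by (rule nonzero_mult_divide_mult_cancel_right)
      qed
      finally show ?thesis .
    qed
    finally show ?thesis .
  qed
  have low: "(S1 * (1 - gf a * (2 + 2 * tau) / (3 + tau)) - 1/100) / AA
      \<le> (S1 + 2 * (AA - Phi a) - 2 * S1 * gf a - 1/100) / AA"
  proof -
    have "2 * (2 * S1 / (3 + tau) * gf a) \<le> 2 * (AA - Phi a)" using ml coef by simp
    moreover have "S1 * (1 - gf a * (2 + 2 * tau) / (3 + tau)) = S1 + 2 * (2 * S1 / (3 + tau) * gf a) - 2 * S1 * gf a"
      using tau_pos by (simp add: field_simps)
    ultimately show ?thesis using AA0 by (intro divide_right_mono) auto
  qed
  define y where "y = exp (-1::real)"
  have ye: "y = inverse (exp 1)" unfolding y_def by (simp add: exp_minus)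
  have y1: "100/272 \<le> y" unfolding ye using e_less_272 by (simp add: field_simps)
  have y2: "y \<le> 1/2"
  proof -
    have "2 \<le> exp (1::real)" using exp_ge_add_one_self[of 1] by simp
    then show ?thesis unfolding ye by (simp add: field_simps)
  qed
  have G1: "gf a \<le> y * (1 + 2/10000)"
  proof -
    have "- (a^2) / 4 \<le> -1 + tau" unfolding asq using tau_pos by (simp add: field_simps tau_def)
    then have "gf a \<le> exp (-1 + tau)" unfolding gf_def by simp
    also have "\<dots> = y * exp tau" unfolding y_def by (simp add: exp_add[symmetric])
    also have "\<dots> \<le> y * (1 + 2 * tau)"
      using real_exp_bound_lemma[of tau] tau_pos unfolding y_def by (simp add: tau_def)
    finally show ?thesis by (simp add: tau_def)
  qed
  have G0: "0 \<le> gf a" using gf_pos[of a] by simp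
  have sp: "177/100 \<le> sqrt pi"
  proof -
    have "(177/100::real)^2 \<le> pi" using pi_approx by (simp add: power2_eq_square)
    then show ?thesis by (rule real_le_rsqrt)
  qed
  have c0: "(exp 1 - 1) / (sqrt pi * exp 1) = (1 - y) / sqrt pi"
    unfolding ye by (simp add: field_simps)
  have "(1 - y) / sqrt pi \<le> (S1 * (1 - gf a * (2 + 2/10000) / (3 + 1/10000)) - 1/100) / AA"
    by (rule numeric[OF y1 y2 G1 G0 S1ge AA0 AA_le2 sp])
  then have "(1 - y) / sqrt pi \<le> (S1 * (1 - gf a * (2 + 2 * tau) / (3 + tau)) - 1/100) / AA"
    by (simp add: tau_def)
  then show ?thesis using low W c0 unfolding S1_def by simp
qed



lemma sg_hh_upper: assumes s: "s > 0" shows "s * hh (Z / s) \<le> max Z 0 + s * hh 0"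
proof -
  have "hh (Z / s) \<le> max (Z / s) 0 + hh 0" by (rule hh_upper)
  then have "s * hh (Z / s) \<le> s * (max (Z / s) 0 + hh 0)" using s by (intro mult_left_mono) auto
  also have "s * max (Z / s) 0 = max Z 0" using s by (simp add: max_def field_simps)
  then have "s * (max (Z / s) 0 + hh 0) = max Z 0 + s * hh 0" by (simp add: distrib_left)
  finally show ?thesis .
qed

lemma sg_hh_lower: assumes s: "s > 0" shows "max Z 0 \<le> s * hh (Z / s)"
proof -
  have "max (Z / s) 0 \<le> hh (Z / s)" using hh_ge_id[of "Z / s"] hh_nonneg[of "Z / s"] by (auto simp: max_def)
  then have "s * max (Z / s) 0 \<le> s * hh (Z / s)" using s by (intro mult_left_mono) auto
  moreover have "s * max (Z / s) 0 = max Z 0" using s by (simp add: max_def field_simps)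
  ultimately show ?thesis by simp
qed

lemma vv_init: assumes e: "0 < e" "e \<le> 1/2" shows "vv e x 0 \<le> max (1 - \<bar>x\<bar>) 0"
proof -
  define s0 where "s0 = sg 0"
  have s0: "s0 > 0" unfolding s0_def by (rule sg_pos)
  have s0t: "sqrt tau = s0" unfolding s0_def sg_def qq_def by simp
  define Z where "Z = Zc e x 0"
  have "s0 * hh (Z / s0) - 2 * (s0 * hh ((Z - 2) / s0)) - sqrt tau * hh 0
      \<le> (max Z 0 + s0 * hh 0) - 2 * max (Z - 2) 0 - s0 * hh 0"
    unfolding s0t using sg_hh_upper[OF s0, of Z] sg_hh_lower[OF s0, of "Z - 2"] by (smt (verit))
  then have "vv e x 0 \<le> e * (max Z 0 - 2 * max (Z - 2) 0)"
    unfolding vv_def s0_def[symmetric] Z_def[symmetric] using e by (simp add: mult_left_mono)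
  also have "\<dots> = max (x + 1) 0 - 2 * max (x + 1 - 2 * e) 0"
    unfolding Z_def Zc_def using e by (simp add: max_def field_simps)
  also have "\<dots> \<le> max (1 - \<bar>x\<bar>) 0" using e by (auto simp: max_def abs_if)
  finally show ?thesis .
qed

lemma vv_pde: assumes e: "0 < e" and t: "t > 0" shows "vvt e x t + vvx e x t \<le> e^2 * vvxx e x t"
proof -
  have s: "sg t > 0" by (rule sg_pos)
  have "qd t = 1" using t by (simp add: qd_pos_t)
  then show ?thesis unfolding vvt_def vvxx_def using e s by (simp add: field_simps power2_eq_square)
qed

lemma vv_grad: "vvx e x t \<in> {-1..1}"
proof -
  have s: "sg t > 0" by (rule sg_pos)
  have "(Zc e x t - 2) / sg t \<le> Zc e x t / sg t" using s by (simp add: divide_right_mono)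
  then have m: "NN ((Zc e x t - 2) / sg t) \<le> NN (Zc e x t / sg t)" by (rule NN_mono)
  show ?thesis unfolding vvx_def using m NN_ge0[of "(Zc e x t - 2) / sg t"] NN_le1[of "Zc e x t / sg t"]
    by auto
qed

lemma vv_ub: assumes e: "0 < e" and t: "0 \<le> t" shows "vv e x t \<le> e * (2 + hh 0) + e * hh 0 * t"
proof -
  have s: "sg t > 0" by (rule sg_pos)
  define Z where "Z = Zc e x t"
  have h0: "hh 0 > 0" using AA_pos by (simp add: hh0)
  have "sg t * hh (Z / sg t) - 2 * (sg t * hh ((Z - 2) / sg t)) - sqrt tau * hh 0
      \<le> (max Z 0 + sg t * hh 0) - 2 * max (Z - 2) 0 - 0"
    using sg_hh_upper[OF s, of Z] sg_hh_lower[OF s, of "Z - 2"] h0 mult_nonneg_nonneg[of "sqrt tau" "hh 0"]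
    by (smt (verit) real_sqrt_ge_zero tau_pos)
  also have "\<dots> \<le> 2 + sg t * hh 0" by (auto simp: max_def)
  also have "\<dots> \<le> 2 + (1 + t) * hh 0"
  proof -
    have "sg t = sqrt (t + tau)" unfolding sg_def using t by (simp add: qq_pos_t)
    also have "\<dots> \<le> 1 + t"
      using t tau_pos by (intro real_sqrt_le_iff[THEN iffD2, THEN order_trans[OF _ eq_refl]] real_le_lsqrt)
        (auto simp: power2_eq_square tau_def algebra_simps)
    finally show ?thesis using h0 by (intro add_left_mono mult_right_mono) auto
  qed
  finally have "sg t * hh (Z / sg t) - 2 * (sg t * hh ((Z - 2) / sg t)) - sqrt tau * hh 0 \<le> 2 + (1 + t) * hh 0" .
  then have "vv e x t \<le> e * (2 + (1 + t) * hh 0)"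
    unfolding vv_def Z_def[symmetric] using e by (simp add: mult_left_mono)
  then show ?thesis by (simp add: algebra_simps)
qed

lemma vv_val: "vv e 0 1 = e * (sg 1 * hh 0 - 2 * (sg 1 * hh ((0 - 2) / sg 1)) - sqrt tau * hh 0)"
  unfolding vv_def Zc_def by simp



theorem theorem1p3:
  fixes F :: "real \<Rightarrow> real" and g :: "real \<Rightarrow> real"
    and \<epsilon> :: real and u\<epsilon> u :: "real \<Rightarrow> real \<Rightarrow> real"
  assumes "loc_lipschitz F"
    and "\<And>p. p \<in> {0..1} \<Longrightarrow> F p = p"
    and "\<And>p. p \<in> {-1..0} \<Longrightarrow> F p \<le> p"
    and "\<And>x. g x = max (1 - \<bar>x\<bar>) 0"
    and "\<epsilon> \<in> {0<..<1/4}"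
    and "visc_sol F \<epsilon> g u\<epsilon>" and "BUC u\<epsilon>"
    and "visc_sol F 0 g u" and "BUC u"
  shows "\<bar>u\<epsilon> 0 1 - u 0 1\<bar> \<ge> (exp 1 - 1) / (sqrt pi * exp 1) * sqrt \<epsilon>"
proof -
  note Flip = assms(1) and Feq = assms(2) and Fneg = assms(3) and gdef = assms(4)
    and eps = assms(5) and vse = assms(6) and BUCe = assms(7) and vs0 = assms(8) and BUC0 = assms(9)
  obtain L where Lip: "L-lipschitz_on {-2..2} F"
    using Flip unfolding loc_lipschitz_def by (meson compact_Icc)
  have bnd: "\<exists>B. \<forall>x t. t \<ge> 0 \<longrightarrow> \<bar>w x t\<bar> \<le> B" if "BUC w" for w :: "real \<Rightarrow> real \<Rightarrow> real"
  proof -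
    have "bounded ((\<lambda>(x,t). w x t) ` (UNIV \<times> {0..}))" using that unfolding BUC_def by blast
    then obtain B where B: "\<And>y. y \<in> (\<lambda>(x,t). w x t) ` (UNIV \<times> {0..}) \<Longrightarrow> norm y \<le> B"
      unfolding bounded_iff by blast
    have "\<bar>w x t\<bar> \<le> B" if "t \<ge> 0" for x t
      using B[of "w x t"] that by force
    then show ?thesis by blast
  qed
  obtain B0 where B0: "\<And>x t. t \<ge> 0 \<Longrightarrow> \<bar>u x t\<bar> \<le> B0" using bnd[OF BUC0] by blast
  obtain Be where Be: "\<And>x t. t \<ge> 0 \<Longrightarrow> \<bar>u\<epsilon> x t\<bar> \<le> Be" using bnd[OF BUCe] by blast
  have u01: "u 0 1 \<le> 0"
    by (rule u_upper[OF vs0 B0 Lip Feq gdef])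
  define e where "e = sqrt \<epsilon>"
  have e0: "0 < e" using eps by (simp add: e_def)
  have e2: "e^2 = \<epsilon>" using eps by (simp add: e_def)
  have e1: "e \<le> 1/2"
  proof -
    have "sqrt \<epsilon> \<le> sqrt (1/4)" using eps by simp
    also have "sqrt (1/4) = (1/2::real)" by (rule real_sqrt_unique) (auto simp: power2_eq_square)
    finally show ?thesis by (simp add: e_def)
  qed
  have Fle: "F p \<le> p" if "p \<in> {-1..1}" for p
  proof (cases "0 \<le> p")
    case True then show ?thesis using Feq[of p] that by simp
  next
    case False then show ?thesis using Fneg[of p] that by simp
  qed
  have low: "vv e 0 1 \<le> u\<epsilon> 0 1"
  proof (rule lower_cmp[OF vse Be Lip Fle _ _ test_fn_vv[OF e0]])
    show "0 \<le> \<epsilon>" "\<epsilon> \<le> 1" using eps by auto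
    fix x show "vv e x 0 \<le> g x" using vv_init[OF e0 e1, of x] gdef[of x] by simp
  next
    fix x t :: real assume "t > 0"
    then show "vvt e x t + vvx e x t \<le> \<epsilon> * vvxx e x t" using vv_pde[OF e0] e2 by simp
  next
    fix x t show "vvx e x t \<in> {-1..1}" by (rule vv_grad)
  next
    fix x t :: real assume "t \<ge> 0"
    then show "vv e x t \<le> e * (2 + hh 0) + e * hh 0 * t" by (rule vv_ub[OF e0])
  next
    show "0 \<le> e * hh 0" using e0 AA_pos by (simp add: hh0)
  qed simp_all
  have "(exp 1 - 1) / (sqrt pi * exp 1) * e \<le> vv e 0 1"
    unfolding vv_val using mult_left_mono[OF value_W1, of e] e0 by (simp add: mult.commute)
  then have "(exp 1 - 1) / (sqrt pi * exp 1) * sqrt \<epsilon> \<le> u\<epsilon> 0 1 - u 0 1"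
    using low u01 unfolding e_def by simp
  then show ?thesis by simp
qed


end
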